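(* Let $(L,\vee,\wedge,0,1)$ be a complemented lattice with $0\ne1$ and $a,b,c\in L$. Then: (i) $a\to0=a^+$ and $1\to a=\{a\}$; (ii) if $a\le b$ then $a\to b=\{1\}$; (iii) $a\to b=\{1\}$ if and only if $a\wedge b\in a^{++}$; (iv) if $b\in a^+$ then $a\to b=a^+$; (v) if $b\le c$ then $a\to b\le_i a\to c$ for $i=1,2$; (vi) if $a\to b=a\to c=\{1\}$ and $a^{++}$ is closed under $\wedge$, then $a\to(b\wedge c)=\{1\}$; (vii) if $a^{++}\subseteq b^{++}$ and $a\to b=\{1\}$, then $b\to a=\{1\}$.
   Context: For $a\in L$, $a^+:=\{x\in L\mid a\vee x=1,\ a\wedge x=0\}$ (the set of all complements of $a$); for $A\subseteq L$, $A^+:=\{x\in L\mid a\vee x=1\text{ and }a\wedge x=0\text{ for all }a\in A\}$, and $a^{++}:=(a^+)^+$. For $A,B\subseteq L$: $A\vee B:=\{x\vee y\mid x\in A,y\in B\}$; $A\le_1B$ means for every $x\in A$ there is $y\in B$ with $x\le y$; $A\le_2B$ means for every $y\in B$ there is $x\in A$ with $x\le y$. For $a,b\in L$, $a\to b:=a^+\vee\{a\wedge b\}=\{x\vee(a\wedge b)\mid x\in a^+\}$. *)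

theory Defs
  imports Main
begin

definition cmpl :: "'a::bounded_lattice \<Rightarrow> 'a set" where
  "cmpl a = {x. sup a x = top \<and> inf a x = bot}"

definition cmplS :: "'a::bounded_lattice set \<Rightarrow> 'a set" where
  "cmplS A = {x. \<forall>a\<in>A. sup a x = top \<and> inf a x = bot}"

definition cmpl2 :: "'a::bounded_lattice \<Rightarrow> 'a set" where
  "cmpl2 a = cmplS (cmpl a)"

definition setsup :: "'a::lattice set \<Rightarrow> 'a set \<Rightarrow> 'a set" where
  "setsup A B = {sup x y | x y. x \<in> A \<and> y \<in> B}"

definition le1 :: "'a::order set \<Rightarrow> 'a set \<Rightarrow> bool" where
  "le1 A B \<longleftrightarrow> (\<forall>x\<in>A. \<exists>y\<in>B. x \<le> y)"

definition le2 :: "'a::order set \<Rightarrow> 'a set \<Rightarrow> bool" where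
  "le2 A B \<longleftrightarrow> (\<forall>y\<in>B. \<exists>x\<in>A. x \<le> y)"

definition arr :: "'a::bounded_lattice \<Rightarrow> 'a \<Rightarrow> 'a set" where
  "arr a b = setsup (cmpl a) {inf a b}"

end

theory Submission imports Defs begin
lemma arr_top_iff:
  fixes a b :: "'a::bounded_lattice"
  assumes "cmpl a \<noteq> {}"
  shows "arr a b = {top} \<longleftrightarrow> (\<forall>x\<in>cmpl a. sup x (inf a b) = top)"
proof
  assume h: "arr a b = {top}"
  show "\<forall>x\<in>cmpl a. sup x (inf a b) = top"
  proof
    fix x assume "x \<in> cmpl a"
    then have "sup x (inf a b) \<in> arr a b" unfolding arr_def setsup_def by blast
    then show "sup x (inf a b) = top" using h by simp
  qed
next
  assume h: "\<forall>x\<in>cmpl a. sup x (inf a b) = top"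
  show "arr a b = {top}"
  proof
    show "arr a b \<subseteq> {top}" using h unfolding arr_def setsup_def by auto
    obtain x where "x \<in> cmpl a" using assms by blast
    then have "sup x (inf a b) \<in> arr a b" unfolding arr_def setsup_def by blast
    then show "{top} \<subseteq> arr a b" using h \<open>x \<in> cmpl a\<close> by simp
  qed
qed
lemma cmpl_top: "cmpl (top::'a::bounded_lattice) = {bot}"
  unfolding cmpl_def by auto
lemma A: "arr (a::'a::bounded_lattice) bot = cmpl a" unfolding arr_def setsup_def by auto
lemma B: "arr (top::'a::bounded_lattice) a = {a}" unfolding arr_def setsup_def cmpl_top by auto
lemma C: "(a::'a::bounded_lattice) \<le> b \<Longrightarrow> cmpl a \<noteq> {} \<Longrightarrow> arr a b = {top}"
  unfolding arr_top_iff  by (auto simp: cmpl_def inf_absorb1 sup_commute)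
lemma D: "b \<in> cmpl (a::'a::bounded_lattice) \<Longrightarrow> arr a b = cmpl a"
    unfolding arr_def setsup_def cmpl_def by auto
lemma cmpl2_iff:
  fixes a b :: "'a::bounded_lattice"
  shows "inf a b \<in> cmpl2 a \<longleftrightarrow> (\<forall>x\<in>cmpl a. sup x (inf a b) = top)"
proof -
  have "inf x (inf a b) = bot" if "x \<in> cmpl a" for x
  proof -
    have "inf x (inf a b) \<le> inf a x" by (meson inf_le1 inf_le2 le_inf_iff)
    moreover have "inf a x = bot" using that unfolding cmpl_def by simp
    ultimately show ?thesis by (metis bot_unique)
  qed
  then show ?thesis unfolding cmpl2_def cmplS_def by (auto simp: sup_commute)
qed
lemma E: "(b::'a::bounded_lattice) \<le> c \<Longrightarrow> le1 (arr a b) (arr a c) \<and> le2 (arr a b) (arr a c)"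
proof -
  assume "b \<le> c"
  then have m: "sup x (inf a b) \<le> sup x (inf a c)" for x
    by (meson inf_mono order_refl sup_mono)
  show ?thesis unfolding le1_def le2_def arr_def setsup_def using m by fastforce
qed
lemma iii: "(\<And>x::'a. cmpl x \<noteq> {}) \<Longrightarrow> arr x y = {top} \<longleftrightarrow> inf x y \<in> cmpl2 (x::'a::bounded_lattice)"
    using arr_top_iff cmpl2_iff by metis
lemma vi: assumes c: "\<And>x::'a. cmpl x \<noteq> {}"
  and h: "arr a b = {top}" "arr a c = {top}" "\<forall>x\<in>cmpl2 a. \<forall>y\<in>cmpl2 a. inf x y \<in> cmpl2 (a::'a::bounded_lattice)"
  shows "arr a (inf b c) = {top}"
proof -
  have 1: "inf a b \<in> cmpl2 a" using h(1) iii[OF c] by blast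
  have 2: "inf a c \<in> cmpl2 a" using h(2) iii[OF c] by blast
  have "inf (inf a b) (inf a c) \<in> cmpl2 a" using h(3) 1 2 by blast
  moreover have "inf (inf a b) (inf a c) = inf a (inf b c)" by (simp add: inf_aci)
  ultimately show ?thesis using iii[OF c] by simp
qed
lemma vii: assumes c: "\<And>x::'a. cmpl x \<noteq> {}"
  and h: "cmpl2 a \<subseteq> cmpl2 b" "arr a (b::'a::bounded_lattice) = {top}"
  shows "arr b a = {top}"
proof -
  have "inf a b \<in> cmpl2 a" using h(2) iii[OF c] by blast
  then have "inf b a \<in> cmpl2 b" using h(1) by (simp add: inf_commute subset_iff)
  then show ?thesis using iii[OF c] by blast
qed
theorem theorem3:
  fixes a b c :: "'a::bounded_lattice"
  assumes complemented: "\<And>x::'a. cmpl x \<noteq> {}"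
    and nontriv: "(bot::'a) \<noteq> top"
  shows "(arr a bot = cmpl a \<and> arr top a = {a})
    \<and> (a \<le> b \<longrightarrow> arr a b = {top})
    \<and> (arr a b = {top} \<longleftrightarrow> inf a b \<in> cmpl2 a)
    \<and> (b \<in> cmpl a \<longrightarrow> arr a b = cmpl a)
    \<and> (b \<le> c \<longrightarrow> le1 (arr a b) (arr a c) \<and> le2 (arr a b) (arr a c))
    \<and> (arr a b = {top} \<and> arr a c = {top} \<and>
          (\<forall>x\<in>cmpl2 a. \<forall>y\<in>cmpl2 a. inf x y \<in> cmpl2 a)
         \<longrightarrow> arr a (inf b c) = {top})
    \<and> (cmpl2 a \<subseteq> cmpl2 b \<and> arr a b = {top} \<longrightarrow> arr b a = {top})"
  apply (intro conjI impI)
  apply (rule A)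
  apply (rule B)
  apply (erule C, rule complemented)
  apply (rule iii, rule complemented)
  apply (erule D)
  apply (erule E[THEN conjunct1])
  apply (erule E[THEN conjunct2])
  apply (rule vi, rule complemented, blast, blast, blast)
  apply (rule vii, rule complemented, blast, blast)
  done

end
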